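(* Under the dual metric loss, no algorithm that always produces a balanced clustering can achieve the $\alpha$-core for any $\alpha\ge1$; that is, for every $\alpha\ge1$ there exists a dual-metric-loss instance in which $k$ divides $n$ and no balanced clustering is in the $\alpha$-core.
   Context: Instance with dual metric loss: finite nonempty set $\mathcal{N}$ of $n$ agents, finite nonempty set $\mathcal{M}$ of feasible centers, positive integer $k$, pseudometric $d^m$ on $\mathcal{N}$, pseudometric $d^c$ on $\mathcal{N}\cup\mathcal{M}$; $\ell_i(C,x)=\max_{j\in C}d^m(i,j)+d^c(i,x)$ for $i\in C\subseteq\mathcal{N}$, $x\in\mathcal{M}$. A clustering is $\mathcal{X}=\{(C_1,x_1),\dots,(C_k,x_k)\}$ with $C_t$ pairwise disjoint (some possibly empty), union $\mathcal{N}$, $x_t\in\mathcal{M}$; $\ell_i(\mathcal{X})=\ell_i(C_t,x_t)$ where $i\in C_t$. It is balanced if, whenever $k$ divides $n$, $|C_t|=n/k$ for all $t$. For $\alpha\ge1$, $\mathcal{X}$ is in the $\alpha$-core if there is no $S\subseteq\mathcal{N}$ with $|S|\ge n/k$ and $y\in\mathcal{M}$ with $\alpha\,\ell_i(S,y)<\ell_i(\mathcal{X})$ for all $i\in S$. *)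

theory Defs
  imports Complex_Main
begin

text \<open>Agents have type 'a, feasible centers have type 'b; the center distance d^c
  lives on the disjoint union 'a + 'b (agents as Inl, centers as Inr).\<close>

definition pseudometric_on :: "'p set \<Rightarrow> ('p \<Rightarrow> 'p \<Rightarrow> real) \<Rightarrow> bool" where
  "pseudometric_on S d \<longleftrightarrow>
     (\<forall>x\<in>S. d x x = 0) \<and>
     (\<forall>x\<in>S. \<forall>y\<in>S. d x y \<ge> 0) \<and>
     (\<forall>x\<in>S. \<forall>y\<in>S. d x y = d y x) \<and>
     (\<forall>x\<in>S. \<forall>y\<in>S. \<forall>z\<in>S. d x z \<le> d x y + d y z)"

definition dual_instance ::
  "'a set \<Rightarrow> 'b set \<Rightarrow> nat \<Rightarrow> ('a \<Rightarrow> 'a \<Rightarrow> real) \<Rightarrow> ('a + 'b \<Rightarrow> 'a + 'b \<Rightarrow> real) \<Rightarrow> bool" where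
  "dual_instance N M k dm dc \<longleftrightarrow>
     finite N \<and> N \<noteq> {} \<and> finite M \<and> M \<noteq> {} \<and> k > 0 \<and>
     pseudometric_on N dm \<and> pseudometric_on (Inl ` N \<union> Inr ` M) dc"

definition dual_loss ::
  "('a \<Rightarrow> 'a \<Rightarrow> real) \<Rightarrow> ('a + 'b \<Rightarrow> 'a + 'b \<Rightarrow> real) \<Rightarrow> 'a \<Rightarrow> 'a set \<Rightarrow> 'b \<Rightarrow> real" where
  "dual_loss dm dc i C x = Max ((\<lambda>j. dm i j) ` C) + dc (Inl i) (Inr x)"

text \<open>A clustering is indexed by t < k: clusters C t (possibly empty), centers x t.\<close>
definition is_clustering ::
  "'a set \<Rightarrow> 'b set \<Rightarrow> nat \<Rightarrow> (nat \<Rightarrow> 'a set) \<Rightarrow> (nat \<Rightarrow> 'b) \<Rightarrow> bool" where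
  "is_clustering N M k C x \<longleftrightarrow>
     (\<forall>t<k. \<forall>t'<k. t \<noteq> t' \<longrightarrow> C t \<inter> C t' = {}) \<and>
     (\<Union>t\<in>{..<k}. C t) = N \<and>
     (\<forall>t<k. x t \<in> M)"

definition balanced :: "'a set \<Rightarrow> nat \<Rightarrow> (nat \<Rightarrow> 'a set) \<Rightarrow> bool" where
  "balanced N k C \<longleftrightarrow> (k dvd card N \<longrightarrow> (\<forall>t<k. card (C t) = card N div k))"

definition clustering_loss ::
  "('a \<Rightarrow> 'a \<Rightarrow> real) \<Rightarrow> ('a + 'b \<Rightarrow> 'a + 'b \<Rightarrow> real) \<Rightarrow> nat \<Rightarrow> (nat \<Rightarrow> 'a set) \<Rightarrow> (nat \<Rightarrow> 'b) \<Rightarrow> 'a \<Rightarrow> real" where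
  "clustering_loss dm dc k C x i =
     (let t = (THE t. t < k \<and> i \<in> C t) in dual_loss dm dc i (C t) (x t))"

definition in_alpha_core ::
  "real \<Rightarrow> 'a set \<Rightarrow> 'b set \<Rightarrow> nat \<Rightarrow> ('a \<Rightarrow> 'a \<Rightarrow> real) \<Rightarrow> ('a + 'b \<Rightarrow> 'a + 'b \<Rightarrow> real)
     \<Rightarrow> (nat \<Rightarrow> 'a set) \<Rightarrow> (nat \<Rightarrow> 'b) \<Rightarrow> bool" where
  "in_alpha_core \<alpha> N M k dm dc C x \<longleftrightarrow>
     \<not> (\<exists>S y. S \<subseteq> N \<and> real (card S) \<ge> real (card N) / real k \<and> y \<in> M \<and>
            (\<forall>i\<in>S. \<alpha> * dual_loss dm dc i S y < clustering_loss dm dc k C x i))"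

end

theory Submission
  imports Defs
begin

definition pmf0 :: "real \<Rightarrow> nat \<Rightarrow> real" where
  "pmf0 a i = (if i = 0 then - (10*a*a*a) else if i = 2 then a else 0)"

definition pcf0 :: "real \<Rightarrow> nat + nat \<Rightarrow> real" where
  "pcf0 a u = (case u of Inl i \<Rightarrow> (if i = 1 \<or> i = 2 then 3*a*a else 0)
                       | Inr c \<Rightarrow> (if c = 4 then 3*a*a - 1 else 0))"

definition dmf :: "real \<Rightarrow> nat \<Rightarrow> nat \<Rightarrow> real" where
  "dmf a i j = \<bar>pmf0 a i - pmf0 a j\<bar>"

definition dcf :: "real \<Rightarrow> nat + nat \<Rightarrow> nat + nat \<Rightarrow> real" where
  "dcf a u v = \<bar>pcf0 a u - pcf0 a v\<bar>"

lemma pseudo_abs: "pseudometric_on S (\<lambda>x y. \<bar>f x - f y\<bar> :: real)"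
  unfolding pseudometric_on_def by auto

lemma dual_loss_pair:
  "dual_loss dm dc i {u, v} y = max (dm i u) (dm i v) + dc (Inl i) (Inr y)"
  unfolding dual_loss_def by simp

lemma dual_loss_ge:
  assumes "finite C" "j \<in> C" "dc (Inl i) (Inr y) \<ge> 0"
  shows "dual_loss dm dc i C y \<ge> dm i j"
proof -
  have "dm i j \<le> Max ((\<lambda>j. dm i j) ` C)" using assms by (intro Max_ge) auto
  then show ?thesis unfolding dual_loss_def using assms by linarith
qed

lemma block:
  fixes a :: real
  assumes a1: "a \<ge> 1" and dis: "A \<inter> B = {}" and un: "A \<union> B = {0,1,2,3}"
    and cA: "card A = 2" and z: "0 \<in> A" and xa: "xa \<in> {4,5}" and xb: "xb \<in> {4,5}"
    and curA: "\<forall>i\<in>A. cur i = dual_loss (dmf a) (dcf a) i A xa"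
    and curB: "\<forall>i\<in>B. cur i = dual_loss (dmf a) (dcf a) i B xb"
  shows "\<exists>S y. S \<subseteq> {0,1,2,3} \<and> real (card S) \<ge> real 4 / real 2 \<and> y \<in> {4::nat,5} \<and>
            (\<forall>i\<in>S. a * dual_loss (dmf a) (dcf a) i S y < cur i)"
proof -
  have aa: "a * a \<ge> a" using mult_left_mono[of 1 a a] a1 by simp
  have aaa: "a * a * a \<ge> a * a" using mult_left_mono[of 1 a "a*a"] a1 aa by simp
  obtain u v where uv: "A = {u, v}" "u \<noteq> v" using cA by (meson card_2_iff)
  obtain p where Ap: "A = {0, p}" "p \<noteq> 0" using uv z by auto
  have "p \<in> {0,1,2,3}" using un Ap by blast
  then have p123: "p = 1 \<or> p = 2 \<or> p = 3" using Ap by simp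
  have Bdef: "B = {0,1,2,3} - A" using dis un by blast
  have fA: "finite A" using Ap by simp
  have lowp: "cur p \<ge> 10*a*a*a"
  proof -
    have "cur p = dual_loss (dmf a) (dcf a) p A xa" using curA Ap by auto
    moreover have "dual_loss (dmf a) (dcf a) p A xa \<ge> dmf a p 0"
      using fA Ap by (intro dual_loss_ge) (auto simp: dcf_def)
    moreover have "dmf a p 0 \<ge> 10*a*a*a" using p123 a1 aa aaa
      by (auto simp: dmf_def pmf0_def)
    ultimately show ?thesis by linarith
  qed
  have c2: "real (card {i::nat, j}) \<ge> real 4 / real 2" if "i \<noteq> j" for i j using that by simp
  from p123 show ?thesis
  proof (elim disjE)
    assume p: "p = 1"
    have B: "B = {2,3}" using Bdef Ap p by auto
    have c3: "cur 3 = dual_loss (dmf a) (dcf a) 3 {2,3} xb" using curB B by auto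
    have pos: "3*a*a - 1 > 0" using aa a1 by linarith
    have "cur 3 > 0" using c3 xb a1 pos
      by (auto simp: dual_loss_pair dmf_def dcf_def pmf0_def pcf0_def)
    moreover have "a * dual_loss (dmf a) (dcf a) 3 {1,3} 5 = 0"
      by (simp add: dual_loss_pair dmf_def dcf_def pmf0_def pcf0_def)
    ultimately have l3: "a * dual_loss (dmf a) (dcf a) 3 {1,3} 5 < cur 3" by linarith
    have e1: "a * dual_loss (dmf a) (dcf a) 1 {1,3} 5 = 3*a*a*a"
      using a1 by (simp add: dual_loss_pair dmf_def dcf_def pmf0_def pcf0_def algebra_simps)
    have "cur 1 \<ge> 10*a*a*a" using lowp p by simp
    then have l1: "a * dual_loss (dmf a) (dcf a) 1 {1,3} 5 < cur 1" unfolding e1 using aaa aa a1 by linarith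
    show ?thesis by (intro exI[of _ "{1,3}"] exI[of _ 5]) (use l1 l3 in auto)
  next
    assume p: "p = 2"
    have B: "B = {1,3}" using Bdef Ap p by auto
    have c1: "cur 1 = dual_loss (dmf a) (dcf a) 1 {1,3} xb" using curB B by auto
    have c3: "cur 3 = dual_loss (dmf a) (dcf a) 3 {1,3} xb" using curB B by auto
    have c2l: "cur 2 \<ge> 10*a*a*a" using lowp p by simp
    from xb show ?thesis
    proof
      assume x: "xb = 4"
      have "cur 3 = 3*a*a - 1" using c3 x a1 aa
        by (simp add: dual_loss_pair dmf_def dcf_def pmf0_def pcf0_def)
      moreover have "a * dual_loss (dmf a) (dcf a) 3 {2,3} 5 = a*a"
        using a1 by (simp add: dual_loss_pair dmf_def dcf_def pmf0_def pcf0_def)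
      ultimately have l3: "a * dual_loss (dmf a) (dcf a) 3 {2,3} 5 < cur 3" using aa a1 by linarith
      have "a * dual_loss (dmf a) (dcf a) 2 {2,3} 5 = a*a + 3*a*a*a"
        using a1 aa by (simp add: dual_loss_pair dmf_def dcf_def pmf0_def pcf0_def algebra_simps)
      then have l2: "a * dual_loss (dmf a) (dcf a) 2 {2,3} 5 < cur 2" using c2l aa aaa a1 by linarith
      show ?thesis by (intro exI[of _ "{2,3}"] exI[of _ 5]) (use l2 l3 in auto)
    next
      assume "xb \<in> {5}"
      then have x: "xb = 5" by simp
      have "cur 1 = 3*a*a" using c1 x a1 aa
        by (simp add: dual_loss_pair dmf_def dcf_def pmf0_def pcf0_def)
      moreover have "a * dual_loss (dmf a) (dcf a) 1 {1,2} 4 = a*a + a"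
        using a1 aa by (simp add: dual_loss_pair dmf_def dcf_def pmf0_def pcf0_def algebra_simps)
      ultimately have l1: "a * dual_loss (dmf a) (dcf a) 1 {1,2} 4 < cur 1" using aa a1 by linarith
      have "a * dual_loss (dmf a) (dcf a) 2 {1,2} 4 = a*a + a"
        using a1 aa by (simp add: dual_loss_pair dmf_def dcf_def pmf0_def pcf0_def algebra_simps)
      then have l2: "a * dual_loss (dmf a) (dcf a) 2 {1,2} 4 < cur 2" using c2l aa aaa a1 by linarith
      show ?thesis by (intro exI[of _ "{1,2}"] exI[of _ 4]) (use l1 l2 in auto)
    qed
  next
    assume p: "p = 3"
    have B: "B = {1,2}" using Bdef Ap p by auto
    have c1: "cur 1 = dual_loss (dmf a) (dcf a) 1 {1,2} xb" using curB B by auto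
    have pos: "3*a*a - 1 > 0" using aa a1 by linarith
    have "cur 1 \<ge> a + 1" using c1 xb a1 pos
      by (auto simp: dual_loss_pair dmf_def dcf_def pmf0_def pcf0_def)
    moreover have "a * dual_loss (dmf a) (dcf a) 1 {1,3} 4 = a"
      by (simp add: dual_loss_pair dmf_def dcf_def pmf0_def pcf0_def)
    ultimately have l1: "a * dual_loss (dmf a) (dcf a) 1 {1,3} 4 < cur 1" by linarith
    have n: "1 - 3*a*a < 0" using aa a1 by linarith
    have d3: "dual_loss (dmf a) (dcf a) 3 {1,3} 4 = 3*a*a - 1"
      using a1 by (simp add: dual_loss_pair dmf_def dcf_def pmf0_def pcf0_def abs_of_neg[OF n])
    have "a * dual_loss (dmf a) (dcf a) 3 {1,3} 4 = 3*a*a*a - a"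
      unfolding d3 by (simp add: algebra_simps)
    moreover have "cur 3 \<ge> 10*a*a*a" using lowp p by simp
    ultimately have l3: "a * dual_loss (dmf a) (dcf a) 3 {1,3} 4 < cur 3" using aa aaa a1 by linarith
    show ?thesis by (intro exI[of _ "{1,3}"] exI[of _ 4]) (use l1 l3 in auto)
  qed
qed

lemma closs:
  assumes dis: "C 0 \<inter> C 1 = {}" and t: "t < (2::nat)" and i: "i \<in> C t"
  shows "clustering_loss dm dc 2 C x i = dual_loss dm dc i (C t) (x t)"
proof -
  have "(THE t. t < 2 \<and> i \<in> C t) = t"
  proof (rule the_equality)
    show "t < 2 \<and> i \<in> C t" using t i by simp
  next
    fix t' assume "t' < 2 \<and> i \<in> C t'"
    then show "t' = t" using t i dis by (cases t; cases t') auto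
  qed
  then show ?thesis unfolding clustering_loss_def by simp
qed

theorem mainTheorem17:
  fixes \<alpha> :: real
  assumes "\<alpha> \<ge> 1"
  shows "\<exists>(N :: nat set) (M :: nat set) (k :: nat) dm dc.
           dual_instance N M k dm dc \<and> k dvd card N \<and>
           (\<forall>C x. is_clustering N M k C x \<and> balanced N k C \<longrightarrow>
                  \<not> in_alpha_core \<alpha> N M k dm dc C x)"
proof -
  have e1: "dmf \<alpha> = (\<lambda>i j. \<bar>pmf0 \<alpha> i - pmf0 \<alpha> j\<bar>)" by (simp add: fun_eq_iff dmf_def)
  have e2: "dcf \<alpha> = (\<lambda>i j. \<bar>pcf0 \<alpha> i - pcf0 \<alpha> j\<bar>)" by (simp add: fun_eq_iff dcf_def)
  have inst: "dual_instance {0,1,2,3::nat} {4,5::nat} 2 (dmf \<alpha>) (dcf \<alpha>)"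
    unfolding dual_instance_def e1 e2 by (simp add: pseudo_abs)
  have card4: "card {0,1,2,3::nat} = 4" by simp
  have main: "\<not> in_alpha_core \<alpha> {0,1,2,3} {4,5} 2 (dmf \<alpha>) (dcf \<alpha>) C x"
    if cl: "is_clustering {0,1,2,3} {4,5} 2 C x" and bal: "balanced {0,1,2,3::nat} 2 C" for C x
  proof -
    have lt2: "{..<2::nat} = {0,1}" by auto
    have dis: "C 0 \<inter> C 1 = {}" using cl unfolding is_clustering_def by auto
    have un: "C 0 \<union> C 1 = {0,1,2,3}" using cl unfolding is_clustering_def lt2 by simp
    have xs: "x 0 \<in> {4,5}" "x 1 \<in> {4,5}" using cl unfolding is_clustering_def by auto
    have cards: "card (C 0) = 2" "card (C 1) = 2" using bal unfolding balanced_def card4 by auto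
    let ?cur = "clustering_loss (dmf \<alpha>) (dcf \<alpha>) 2 C x"
    have cur0: "\<forall>i\<in>C 0. ?cur i = dual_loss (dmf \<alpha>) (dcf \<alpha>) i (C 0) (x 0)"
    proof
      fix i assume iC: "i \<in> C 0"
      have t2: "(0::nat) < 2" by simp
      show "clustering_loss (dmf \<alpha>) (dcf \<alpha>) 2 C x i = dual_loss (dmf \<alpha>) (dcf \<alpha>) i (C 0) (x 0)"
        by (rule closs[OF dis t2 iC])
    qed
    have cur1: "\<forall>i\<in>C 1. ?cur i = dual_loss (dmf \<alpha>) (dcf \<alpha>) i (C 1) (x 1)"
    proof
      fix i assume iC: "i \<in> C 1"
      have t2: "(1::nat) < 2" by simp
      show "clustering_loss (dmf \<alpha>) (dcf \<alpha>) 2 C x i = dual_loss (dmf \<alpha>) (dcf \<alpha>) i (C 1) (x 1)"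
        by (rule closs[OF dis t2 iC])
    qed
    have "\<exists>S y. S \<subseteq> {0,1,2,3} \<and> real (card S) \<ge> real 4 / real 2 \<and> y \<in> {4::nat,5} \<and>
            (\<forall>i\<in>S. \<alpha> * dual_loss (dmf \<alpha>) (dcf \<alpha>) i S y < ?cur i)"
    proof (cases "0 \<in> C 0")
      case True
      show ?thesis by (rule block[OF assms dis un cards(1) True xs cur0 cur1])
    next
      case False
      have "0 \<in> C 0 \<union> C 1" unfolding un by simp
      then have "0 \<in> C 1" using False by blast
      moreover have "C 1 \<inter> C 0 = {}" using dis by (simp add: Int_commute)
      moreover have "C 1 \<union> C 0 = {0,1,2,3}" using un by (simp add: Un_commute)
      ultimately show ?thesis using block[OF assms _ _ cards(2) _ xs(2,1) cur1 cur0] by blast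
    qed
    then show ?thesis unfolding in_alpha_core_def card4 by auto
  qed
  show ?thesis
    by (rule exI[of _ "{0,1,2,3}"], rule exI[of _ "{4,5}"], rule exI[of _ 2],
        rule exI[of _ "dmf \<alpha>"], rule exI[of _ "dcf \<alpha>"]) 
       (use inst main in \<open>auto simp: card4\<close>)
qed

end
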